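(* Let $N$ be a positive integer, $a,b,c\in\mathbb{R}$ with $a\neq0$, $W=[w_{ij}]\in\mathbb{R}^{N\times N}$ with $w_{ii}=0$ for all $i$, $\Delta=\mathrm{diag}(\delta_1,\dots,\delta_N)$ with $\delta_i\in\{0,1\}$, and $h>0$. Put $\Phi_s=e^{ah}I_N+\frac{c}{a}(e^{ah}-1)W$ and $\Psi_s=\frac{b}{a}(e^{ah}-1)\Delta$. If the pair $(W,\Delta)$ is controllable, $b\neq0$ and $c\neq0$, then the discrete-time system $X(k+1)=\Phi_sX(k)+\Psi_sU(k)$ is controllable.
   Context: This is the networked sampled-data system with one-dimensional node dynamics (node state matrix $a$, input matrix $b$, and inner coupling $HC=c$). The discrete-time system $X(k+1)=\Phi_sX(k)+\Psi_sU(k)$, $X(k)\in\mathbb{R}^N$, $U(k)\in\mathbb{R}^N$, is called controllable if every initial state can be steered to the origin in finitely many steps. For $F\in\mathbb{C}^{q\times q}$, $G\in\mathbb{C}^{q\times s}$, the pair $(F,G)$ is called controllable if $\mathrm{rank}[sI_q-F,\ G]=q$ for every $s\in\mathbb{C}$. *)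

theory Defs
  imports "HOL-Analysis.Analysis"
begin

definition hblock :: "'a::field^'q^'r \<Rightarrow> 'a^'s^'r \<Rightarrow> 'a^('q + 's)^'r" where
  "hblock F G = (\<chi> i j. case j of Inl k \<Rightarrow> F $ i $ k | Inr k \<Rightarrow> G $ i $ k)"

definition pair_controllable :: "complex^'q^'q \<Rightarrow> complex^'s^'q \<Rightarrow> bool" where
  "pair_controllable F G \<longleftrightarrow> (\<forall>s::complex. rank (hblock (mat s - F) G) = CARD('q))"


definition diagm :: "('n \<Rightarrow> 'a::zero) \<Rightarrow> 'a^'n^'n" where
  "diagm d = (\<chi> i j. if i = j then d i else 0)"

definition cmat :: "real^'m^'n \<Rightarrow> complex^'m^'n" where
  "cmat A = (\<chi> i j. complex_of_real (A $ i $ j))"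

definition dt_controllable :: "real^'n^'n \<Rightarrow> real^'m^'n \<Rightarrow> bool" where
  "dt_controllable Phi Psi \<longleftrightarrow>
     (\<forall>x0. \<exists>K::nat. \<exists>X::nat \<Rightarrow> real^'n. \<exists>U::nat \<Rightarrow> real^'m.
        X 0 = x0 \<and> (\<forall>k. X (Suc k) = Phi *v X k + Psi *v U k) \<and> X K = 0)"

end

theory Submission imports Defs "HOL-Complex_Analysis.Cauchy_Integral_Formula" "HOL-Computational_Algebra.Polynomial" begin

lemma vm_sum_rows:
  fixes M :: "'a::field^'c^'n"
  shows "v v* M = (\<Sum>i\<in>UNIV. v$i *s row i M)"
  unfolding vec_eq_iff vector_matrix_mult_def row_def by (simp add: sum_component)

lemma rank_left_null:
  fixes M :: "'a::field^'c^'n"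
  assumes "v v* M = 0" "v \<noteq> 0"
  shows "rank M < CARD('n)"
proof -
  obtain k where k: "v$k \<noteq> 0" using assms(2) by (auto simp: vec_eq_iff)
  define R where "R = (\<lambda>i. row i M) ` (UNIV - {k})"
  define S where "S = (\<Sum>i\<in>UNIV-{k}. v$i *s row i M)"
  have "(\<Sum>i\<in>UNIV. v$i *s row i M) = v$k *s row k M + S"
    unfolding S_def by (rule sum.remove) auto
  hence eq: "v$k *s row k M + S = 0"
    using assms(1) by (simp add: vm_sum_rows)
  have "S \<in> vec.span R"
    unfolding R_def S_def by (intro vec.span_sum vec.span_scale vec.span_base) auto
  hence "(- inverse (v$k)) *s S \<in> vec.span R"
    by (rule vec.span_scale)
  moreover have "(- inverse (v$k)) *s S = row k M"
  proof -
    have "S = - (v$k *s row k M)" using eq by (simp add: eq_neg_iff_add_eq_0 add.commute)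
    thus ?thesis using k by (simp add: vec_eq_iff field_simps)
  qed
  ultimately have rk: "row k M \<in> vec.span R" by simp
  have "rows M \<subseteq> vec.span R"
  proof
    fix x assume "x \<in> rows M"
    then obtain i where x: "x = row i M" by (auto simp: rows_def)
    show "x \<in> vec.span R"
    proof (cases "i = k")
      case True thus ?thesis using rk x by simp
    next
      case False thus ?thesis unfolding x R_def by (intro vec.span_base) auto
    qed
  qed
  hence "vec.dim (rows M) \<le> card R" by (intro vec.dim_le_card) (auto simp: R_def)
  also have "card R \<le> card (UNIV - {k::'n})" unfolding R_def by (rule card_image_le) simp
  also have "\<dots> < CARD('n)" by (simp add: card_Diff_singleton)
  finally show ?thesis by (simp add: row_rank_def_gen)
qed


lemma span_image_repr:
  fixes g :: "nat \<Rightarrow> 'a::field^'n"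
  assumes "x \<in> vec.span (g ` {..<k})"
  shows "\<exists>a. x = (\<Sum>i<k. a i *s g i)"
proof -
  let ?T = "{x. \<exists>a. x = (\<Sum>i<k. a i *s g i)}"
  have sub: "vec.subspace ?T" unfolding vec.subspace_def
  proof (intro conjI ballI allI)
    show "0 \<in> ?T" by (rule CollectI, rule exI[of _ "\<lambda>_. 0"]) simp
  next
    fix x y assume "x \<in> ?T" "y \<in> ?T"
    then obtain a b where "x = (\<Sum>i<k. a i *s g i)" "y = (\<Sum>i<k. b i *s g i)" by auto
    thus "x + y \<in> ?T"
      by (intro CollectI exI[of _ "\<lambda>i. a i + b i"]) (simp add: sum.distrib vec.scale_left_distrib)
  next
    fix c x assume "x \<in> ?T"
    then obtain a where "x = (\<Sum>i<k. a i *s g i)" by auto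
    thus "c *s x \<in> ?T"
      by (intro CollectI exI[of _ "\<lambda>i. c * a i"]) (simp add: vec.scale_sum_right)
  qed
  have "g ` {..<k} \<subseteq> ?T"
  proof
    fix y assume "y \<in> g ` {..<k}"
    then obtain j where j: "j < k" "y = g j" by auto
    have "(\<Sum>i<k. (if i = j then 1 else 0) *s g i) = (\<Sum>i<k. if i = j then g i else 0)"
      by (rule sum.cong) auto
    also have "\<dots> = g j" using j by simp
    finally have "y = (\<Sum>i<k. (\<lambda>i. if i = j then 1 else 0) i *s g i)" using j by simp
    thus "y \<in> ?T" by (intro CollectI exI[of _ "\<lambda>i. if i = j then 1 else 0"]) simp
  qed
  hence "vec.span (g ` {..<k}) \<subseteq> ?T" using sub by (rule vec.span_minimal)
  thus ?thesis using assms by blast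
qed

lemma eig_exists:
  fixes f :: "complex^'n \<Rightarrow> complex^'n" and P :: "complex^'n \<Rightarrow> bool"
  assumes fadd: "\<And>x y. f (x + y) = f x + f y" and fscale: "\<And>c x. f (c *s x) = c *s f x"
    and Padd: "\<And>x y. P x \<Longrightarrow> P y \<Longrightarrow> P (x + y)" and Pscale: "\<And>c x. P x \<Longrightarrow> P (c *s x)"
    and Pf: "\<And>x. P x \<Longrightarrow> P (f x)" and Pvz: "P vz" and nz: "vz \<noteq> 0"
  shows "\<exists>w s. w \<noteq> 0 \<and> P w \<and> f w = s *s w"
proof -
  have f0: "f 0 = 0" using fscale[of 0 0] by simp
  have fsum: "f (\<Sum>i\<in>A. u i) = (\<Sum>i\<in>A. f (u i))" if "finite A" for A and u :: "nat \<Rightarrow> _"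
    using that by (induction A rule: finite_induct) (simp_all add: f0 fadd)
  have P0: "P 0" using Pscale[OF Pvz, of 0] by simp
  have Psum: "P (\<Sum>i\<in>A. u i)" if "finite A" "\<And>i. P (u i)" for A and u :: "nat \<Rightarrow> _"
    using that by (induction A rule: finite_induct) (simp_all add: P0 Padd)
  define g where "g i = (f ^^ i) vz" for i
  have gP: "P (g i)" for i by (induction i) (auto simp: g_def Pvz Pf)
  have gS: "g (Suc i) = f (g i)" for i by (simp add: g_def)
  define Q where "Q k \<longleftrightarrow> g k \<in> vec.span (g ` {..<k})" for k
  have exQ: "\<exists>k. Q k"
  proof (rule ccontr)
    assume "\<not> ?thesis"
    hence nQ: "g k \<notin> vec.span (g ` {..<k})" for k by (auto simp: Q_def)
    have "vec.dim (g ` {..<k}) = k" for k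
    proof (induction k)
      case 0 show ?case by simp
    next
      case (Suc k)
      have "g ` {..<Suc k} = insert (g k) (g ` {..<k})" by (simp add: lessThan_Suc)
      thus ?case using nQ[of k] Suc.IH by (simp add: vec.dim_insert)
    qed
    from this[of "Suc CARD('n)"] dim_subset_UNIV_cart_gen[of "g ` {..<Suc CARD('n)}"]
    show False by simp
  qed
  define k where "k = (LEAST k. Q k)"
  have Qk: "Q k" unfolding k_def using exQ by (metis LeastI)
  have minQ: "\<not> Q j" if "j < k" for j using that unfolding k_def using not_less_Least by blast
  have k0: "k \<noteq> 0"
  proof
    assume "k = 0" with Qk show False using nz by (simp add: Q_def g_def)
  qed
  obtain a where a: "g k = (\<Sum>i<k. a i *s g i)"
    using Qk span_image_repr unfolding Q_def by blast
  define q :: "complex poly" where "q = monom 1 k - (\<Sum>i<k. monom (a i) i)"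
  have cq: "coeff q i = (if i = k then 1 else 0) - (if i < k then a i else 0)" for i
    unfolding q_def by (simp add: coeff_sum coeff_monom)
  have cqk: "coeff q k = 1" by (simp add: cq)
  have degq: "degree q = k"
  proof (rule antisym)
    show "degree q \<le> k" by (rule degree_le) (auto simp: cq)
    show "k \<le> degree q" by (rule le_degree) (simp add: cqk)
  qed
  have ex1: "coeff q 0 = 0 \<or> (\<exists>i\<in>{1..k}. coeff q i \<noteq> 0)"
    using cqk k0 by (intro disjI2 bexI[of _ k]) auto
  obtain r where r: "(\<Sum>i\<le>k. coeff q i * r ^ i) = 0"
    by (rule fundamental_theorem_of_algebra[of "coeff q" k, OF ex1])
  have "poly q r = 0"
  proof -
    have "poly q r = poly (\<Sum>i\<le>k. monom (coeff q i) i) r"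
      using poly_as_sum_of_monoms'[of q k] degq by simp
    also have "\<dots> = (\<Sum>i\<le>k. coeff q i * r ^ i)" by (simp add: poly_sum poly_monom)
    finally show ?thesis using r by simp
  qed
  define h where "h = synthetic_div q r"
  have qh0: "[:-r, 1:] * h + [:poly q r:] = q"
    unfolding h_def by (rule synthetic_div_correct')
  have qh: "q = [:-r, 1:] * h"
    using qh0 unfolding \<open>poly q r = 0\<close> pCons_0_0 add_0_right by simp
  have degh: "degree h = k - 1" by (simp add: h_def degree_synthetic_div degq)
  have chk1: "coeff h (k - 1) = 1"
  proof -
    have "lead_coeff ([:-r, 1:] * h) = lead_coeff [:-r, 1:] * lead_coeff h" by (rule lead_coeff_mult)
    hence "lead_coeff q = lead_coeff [:-r, 1:] * lead_coeff h" by (simp only: qh[symmetric])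
    thus ?thesis using degq degh cqk by simp
  qed
  have chk: "coeff h k = 0" using degh k0 by (simp add: coeff_eq_0)
  define E where "E p = (\<Sum>i\<le>k. coeff p i *s g i)" for p
  have Eq: "E q = 0"
  proof -
    have ins: "{..k} = insert k {..<k}" by auto
    have "E q = (\<Sum>i<k. coeff q i *s g i) + coeff q k *s g k"
      unfolding E_def ins by (simp add: sum.insert)
    also have "(\<Sum>i<k. coeff q i *s g i) = (\<Sum>i<k. (- a i) *s g i)"
      by (rule sum.cong) (auto simp: cq)
    also have "\<dots> = - (\<Sum>i<k. a i *s g i)" by (simp add: sum_negf)
    finally show ?thesis using a cqk by simp
  qed
  have cmul: "coeff ([:-r, 1:] * h) i = (case i of 0 \<Rightarrow> 0 | Suc m \<Rightarrow> coeff h m) - r * coeff h i" for i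
    by (simp add: mult_pCons_left coeff_pCons)
  obtain k' where k': "k = Suc k'" using k0 by (cases k) auto
  have EqE: "E q = f (E h) - r *s E h"
  proof -
    have "E q = (\<Sum>i\<le>k. (case i of 0 \<Rightarrow> 0 | Suc m \<Rightarrow> coeff h m) *s g i) - (\<Sum>i\<le>k. (r * coeff h i) *s g i)"
      unfolding E_def qh cmul by (simp add: vec.scale_left_diff_distrib sum_subtractf)
    also have "(\<Sum>i\<le>k. (r * coeff h i) *s g i) = r *s E h"
      unfolding E_def by (simp add: vec.scale_sum_right)
    also have "(\<Sum>i\<le>k. (case i of 0 \<Rightarrow> 0 | Suc m \<Rightarrow> coeff h m) *s g i) = (\<Sum>i\<le>k'. coeff h i *s g (Suc i))"
      unfolding k' by (subst sum.atMost_Suc_shift) simp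
    also have "\<dots> = (\<Sum>i\<le>k'. f (coeff h i *s g i))" by (simp add: gS fscale)
    also have "\<dots> = f (\<Sum>i\<le>k'. coeff h i *s g i)" by (simp add: fsum)
    also have "(\<Sum>i\<le>k'. coeff h i *s g i) = E h"
      unfolding E_def k' using chk k' by simp
    finally show ?thesis .
  qed
  have eig: "f (E h) = r *s E h" using Eq EqE by simp
  have PE: "P (E h)" unfolding E_def by (intro Psum) (auto intro: Pscale gP)
  have Enz: "E h \<noteq> 0"
  proof
    assume E0: "E h = 0"
    have "E h = (\<Sum>i<k'. coeff h i *s g i) + g k'"
      unfolding E_def k' using chk chk1 k' by (simp add: lessThan_Suc_atMost[symmetric])
    hence "g k' = - (\<Sum>i<k'. coeff h i *s g i)" using E0 by (simp add: eq_neg_iff_add_eq_0 add.commute)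
    also have "\<dots> \<in> vec.span (g ` {..<k'})"
      by (intro vec.span_neg vec.span_sum vec.span_scale vec.span_base) auto
    finally have "Q k'" by (simp add: Q_def)
    with minQ[of k'] k' show False by simp
  qed
  show ?thesis using Enz PE eig by blast
qed


primrec mpow :: "real^'n^'n \<Rightarrow> nat \<Rightarrow> real^'n^'n" where
  "mpow F 0 = mat 1"
| "mpow F (Suc n) = F ** mpow F n"

primrec traj :: "real^'n^'n \<Rightarrow> real^'m^'n \<Rightarrow> real^'n \<Rightarrow> (nat \<Rightarrow> real^'m) \<Rightarrow> nat \<Rightarrow> real^'n" where
  "traj F G x0 u 0 = x0"
| "traj F G x0 u (Suc n) = F *v traj F G x0 u n + G *v u n"

lemma mv_sum: "(A::real^'n^'m) *v (\<Sum>i\<in>S. u i) = (\<Sum>i\<in>S. A *v u i)"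
  by (induction S rule: infinite_finite_induct) (simp_all add: matrix_vector_right_distrib)

lemma traj_closed:
  "traj F G x0 u n = mpow F n *v x0 + (\<Sum>k<n. mpow F (n - 1 - k) *v (G *v u k))"
proof (induction n)
  case 0 show ?case by simp
next
  case (Suc n)
  have "(\<Sum>k<n. F *v (mpow F (n - 1 - k) *v (G *v u k))) = (\<Sum>k<n. mpow F (Suc n - 1 - k) *v (G *v u k))"
  proof (rule sum.cong)
    fix k assume "k \<in> {..<n}"
    hence "Suc n - 1 - k = Suc (n - 1 - k)" by auto
    thus "F *v (mpow F (n - 1 - k) *v (G *v u k)) = mpow F (Suc n - 1 - k) *v (G *v u k)"
      by (simp add: matrix_vector_mul_assoc matrix_mul_assoc)
  qed simp
  thus ?case using Suc.IH
    by (simp add: matrix_vector_right_distrib mv_sum matrix_vector_mul_assoc add.assoc)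
qed

lemma finite_bound:
  fixes F :: "real^'n^'n" and G :: "real^'m^'n"
  assumes "finite B" "B \<subseteq> {mpow F j *v (G *v u) | j u. True}"
  shows "\<exists>M. \<forall>b\<in>B. \<exists>j u. j < M \<and> b = mpow F j *v (G *v u)"
  using assms
proof (induction B rule: finite_induct)
  case empty show ?case by simp
next
  case (insert b B)
  have "B \<subseteq> {mpow F j *v (G *v u) | j u. True}" using insert.prems by simp
  then obtain M where M: "\<forall>b\<in>B. \<exists>j u. j < M \<and> b = mpow F j *v (G *v u)" using insert.IH by blast
  have "b \<in> {mpow F j *v (G *v u) | j u. True}" using insert.prems by simp
  then obtain j0 u0 where b: "b = mpow F j0 *v (G *v u0)" by blast
  show ?case
  proof (rule exI[of _ "max M (Suc j0)"], intro ballI)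
    fix x assume "x \<in> insert b B"
    thus "\<exists>j u. j < max M (Suc j0) \<and> x = mpow F j *v (G *v u)"
    proof
      assume "x = b" thus ?thesis using b by (intro exI[of _ j0] exI[of _ u0]) auto
    next
      assume "x \<in> B" then obtain j u where "j < M" "x = mpow F j *v (G *v u)" using M by blast
      thus ?thesis by (intro exI[of _ j] exI[of _ u]) auto
    qed
  qed
qed

lemma ctrl_from_span:
  fixes F :: "real^'n^'n" and G :: "real^'m^'n"
  assumes sp: "span {mpow F j *v (G *v u) | j u. True} = UNIV"
  shows "dt_controllable F G"
proof -
  define Kset where "Kset = {mpow F j *v (G *v u) | j u. True}"
  obtain B where B: "B \<subseteq> Kset" "independent B" "Kset \<subseteq> span B" "card B = dim Kset"
    by (rule basis_exists[of Kset])
  have fB: "finite B" using independent_bound[OF B(2)] by (rule conjunct1)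
  have "B \<subseteq> {mpow F j *v (G *v u) | j u. True}" using B(1) by (simp only: Kset_def)
  hence "\<exists>M. \<forall>b\<in>B. \<exists>j u. j < M \<and> b = mpow F j *v (G *v u)" by (rule finite_bound[OF fB])
  then obtain M where M: "\<forall>b\<in>B. \<exists>j u. j < M \<and> b = mpow F j *v (G *v u)" ..
  define T where "T = {x. \<exists>u. x = (\<Sum>k<M. mpow F (M - 1 - k) *v (G *v u k))}"
  have subT: "subspace T" unfolding subspace_def
  proof (intro conjI ballI allI)
    show "0 \<in> T" unfolding T_def by (rule CollectI, rule exI[of _ "\<lambda>_. 0"]) simp
  next
    fix x y assume "x \<in> T" "y \<in> T"
    then obtain a b where "x = (\<Sum>k<M. mpow F (M - 1 - k) *v (G *v a k))"
      "y = (\<Sum>k<M. mpow F (M - 1 - k) *v (G *v b k))" unfolding T_def by auto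
    thus "x + y \<in> T" unfolding T_def
      by (intro CollectI exI[of _ "\<lambda>i. a i + b i"]) (simp add: sum.distrib matrix_vector_right_distrib)
  next
    fix c x assume "x \<in> T"
    then obtain a where "x = (\<Sum>k<M. mpow F (M - 1 - k) *v (G *v a k))" unfolding T_def by auto
    thus "c *\<^sub>R x \<in> T" unfolding T_def
      by (intro CollectI exI[of _ "\<lambda>i. c *\<^sub>R a i"]) (simp add: scaleR_sum_right matrix_vector_mult_scaleR)
  qed
  have "B \<subseteq> T"
  proof
    fix b assume "b \<in> B"
    then obtain j u0 where j: "j < M" "b = mpow F j *v (G *v u0)" using M by blast
    define u where "u k = (if k = M - 1 - j then u0 else 0)" for k
    have "(\<Sum>k<M. mpow F (M - 1 - k) *v (G *v u k)) = (\<Sum>k<M. if k = M - 1 - j then mpow F (M - 1 - k) *v (G *v u0) else 0)"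
      by (rule sum.cong) (auto simp: u_def)
    also have "\<dots> = mpow F (M - 1 - (M - 1 - j)) *v (G *v u0)" using j(1) by simp
    also have "M - 1 - (M - 1 - j) = j" using j(1) by simp
    finally have "b = (\<Sum>k<M. mpow F (M - 1 - k) *v (G *v u k))" using j by simp
    thus "b \<in> T" unfolding T_def by (intro CollectI exI[of _ u])
  qed
  hence "span B \<subseteq> T" using subT by (rule span_minimal)
  moreover have "span Kset \<subseteq> span B" using B(3) by (rule span_minimal) simp
  ultimately have allT: "x \<in> T" for x using sp unfolding Kset_def by blast
  show ?thesis unfolding dt_controllable_def
  proof
    fix x0
    obtain u where u: "- (mpow F M *v x0) = (\<Sum>k<M. mpow F (M - 1 - k) *v (G *v u k))"
      using allT[of "- (mpow F M *v x0)"] unfolding T_def by blast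
    have "traj F G x0 u M = 0" unfolding traj_closed u[symmetric] by simp
    thus "\<exists>K X U. X 0 = x0 \<and> (\<forall>k. X (Suc k) = F *v X k + G *v U k) \<and> X K = 0"
      by (intro exI[of _ M] exI[of _ "traj F G x0 u"] exI[of _ u]) simp
  qed
qed


definition cvec :: "real^'n \<Rightarrow> complex^'n" where
  "cvec x = (\<chi> i. complex_of_real (x$i))"

lemma cv_vm: "cvec x v* cmat M = cvec (x v* M)"
  unfolding cvec_def cmat_def vector_matrix_mult_def vec_eq_iff by simp

lemma cmat_mult: "cmat (A ** B) = cmat A ** cmat B"
  unfolding cmat_def matrix_matrix_mult_def vec_eq_iff by simp

lemma cmat_mat1: "cmat (mat 1) = mat 1"
  unfolding cmat_def mat_def vec_eq_iff by simp

lemma cvec_0: "cvec 0 = 0"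
  unfolding cvec_def vec_eq_iff by simp

lemma cvec_nz: "x \<noteq> 0 \<Longrightarrow> cvec x \<noteq> 0"
  unfolding cvec_def vec_eq_iff by simp

lemma kalman:
  fixes F :: "real^'n^'n" and G :: "real^'m^'n"
  assumes pbh: "\<And>s v. v v* cmat F = s *s v \<Longrightarrow> v v* cmat G = 0 \<Longrightarrow> v = 0"
  shows "span {mpow F j *v (G *v u) | j u. True} = UNIV"
proof (rule ccontr)
  assume "span {mpow F j *v (G *v u) | j u. True} \<noteq> UNIV"
  from span_not_UNIV_orthogonal[OF this] obtain w where
    w: "w \<noteq> 0" "\<forall>x\<in>span {mpow F j *v (G *v u) | j u. True}. w \<bullet> x = 0" by blast
  have wz: "(w v* mpow F j) v* G = 0" for j
  proof -
    let ?z = "(w v* mpow F j) v* G"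
    have "?z \<bullet> ?z = (w v* mpow F j) \<bullet> (G *v ?z)" by (rule dot_lmul_matrix)
    also have "\<dots> = w \<bullet> (mpow F j *v (G *v ?z))" by (rule dot_lmul_matrix)
    also have "\<dots> = 0" by (intro w(2)[rule_format] span_base) blast
    finally show ?thesis by simp
  qed
  define P where "P v \<longleftrightarrow> (\<forall>j. (v v* cmat (mpow F j)) v* cmat G = 0)" for v :: "complex^'n"
  have "\<exists>v s. v \<noteq> 0 \<and> P v \<and> v v* cmat F = s *s v"
  proof (rule eig_exists[where vz = "cvec w"])
    show "(x + y) v* cmat F = x v* cmat F + y v* cmat F" for x y by (rule vector_matrix_left_distrib)
    show "(c *s x) v* cmat F = c *s (x v* cmat F)" for c x by (rule scalar_vector_matrix_assoc)
    show "P (x + y)" if "P x" "P y" for x y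
      using that unfolding P_def by (simp add: vector_matrix_left_distrib)
    show "P (c *s x)" if "P x" for c x
      using that unfolding P_def by (simp add: scalar_vector_matrix_assoc)
    show "P (x v* cmat F)" if "P x" for x
      unfolding P_def
    proof
      fix j
      have "(x v* cmat F) v* cmat (mpow F j) = x v* cmat (mpow F (Suc j))"
        by (simp add: vector_matrix_mul_assoc cmat_mult)
      thus "(x v* cmat F) v* cmat (mpow F j) v* cmat G = 0" using that unfolding P_def by metis
    qed
    show "P (cvec w)" unfolding P_def by (simp add: cv_vm wz cvec_0)
    show "cvec w \<noteq> 0" using w(1) by (rule cvec_nz)
  qed
  then obtain v s where v: "v \<noteq> 0" "P v" "v v* cmat F = s *s v" by blast
  from v(2) have "v v* cmat G = 0" unfolding P_def
    by (metis mpow.simps(1) cmat_mat1 vector_matrix_mul_rid)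
  with pbh v show False by blast
qed

lemma vm_hblock_Inl: "(v v* hblock A B) $ Inl k = (v v* A) $ k"
  unfolding hblock_def vector_matrix_mult_def by simp

lemma vm_hblock_Inr: "(v v* hblock A B) $ Inr k = (v v* B) $ k"
  unfolding hblock_def vector_matrix_mult_def by simp

lemma vm_mat: "(v::'a::comm_ring_1^'n) v* mat s = s *s v"
proof -
  have "(\<Sum>i\<in>UNIV. v$i * (if i = j then s else 0)) = s * v$j" for j
  proof -
    have "(\<Sum>i\<in>UNIV. v$i * (if i = j then s else 0)) = (\<Sum>i\<in>UNIV. if i = j then v$i * s else 0)"
      by (rule sum.cong) auto
    thus ?thesis by (simp add: mult.commute)
  qed
  thus ?thesis unfolding vector_matrix_mult_def mat_def vec_eq_iff by simp
qed

lemma vm_phi: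
  "v v* cmat (x *\<^sub>R mat 1 + y *\<^sub>R W) = complex_of_real x *s v + complex_of_real y *s (v v* cmat W)"
proof -
  have "(\<Sum>i\<in>UNIV. v$i * complex_of_real (x * (if i = j then 1 else 0) + y * W$i$j))
     = (\<Sum>i\<in>UNIV. (if i = j then complex_of_real x * v$i else 0) + complex_of_real y * (v$i * complex_of_real (W$i$j)))" for j
    by (rule sum.cong) (auto simp: algebra_simps)
  thus ?thesis
    unfolding vector_matrix_mult_def cmat_def mat_def vec_eq_iff
    by (simp add: sum.distrib sum_distrib_left)
qed

lemma vm_psi:
  "v v* cmat (y *\<^sub>R D) = complex_of_real y *s (v v* cmat D)"
  unfolding vector_matrix_mult_def cmat_def vec_eq_iff
  by (simp add: sum_distrib_left mult_ac)

theorem corollary8: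
  fixes a b c h :: real and W :: "real^'n^'n" and \<delta> :: "'n \<Rightarrow> real"
  assumes "a \<noteq> 0" and "h > 0"
    and "\<forall>i. W $ i $ i = 0"
    and "\<forall>i. \<delta> i \<in> {0, 1}"
    and "pair_controllable (cmat W) (cmat (diagm \<delta>))"
    and "b \<noteq> 0" and "c \<noteq> 0"
  shows "dt_controllable
           (exp (a * h) *\<^sub>R mat 1 + ((c / a) * (exp (a * h) - 1)) *\<^sub>R W)
           (((b / a) * (exp (a * h) - 1)) *\<^sub>R diagm \<delta>)"
proof -
  define e where "e = exp (a * h)"
  define \<kappa> where "\<kappa> = (c / a) * (e - 1)"
  define \<beta> where "\<beta> = (b / a) * (e - 1)"
  have "a * h \<noteq> 0" using assms(1,2) by simp
  hence e1: "e \<noteq> 1" unfolding e_def by simp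
  have k0: "\<kappa> \<noteq> 0" unfolding \<kappa>_def using e1 assms(1,7) by simp
  have b0: "\<beta> \<noteq> 0" unfolding \<beta>_def using e1 assms(1,6) by simp
  have pbhW: "v = 0" if "v v* cmat W = s *s v" "v v* cmat (diagm \<delta>) = 0" for s v
  proof (rule ccontr)
    assume nz: "v \<noteq> 0"
    have "v v* (mat s - cmat W) = 0"
      using that(1) by (simp add: vector_matrix_mult_diff_rdistrib vm_mat)
    hence "v v* hblock (mat s - cmat W) (cmat (diagm \<delta>)) = 0"
      using that(2) unfolding vec_eq_iff
      by (metis (full_types) sum.exhaust vm_hblock_Inl vm_hblock_Inr zero_index)
    from rank_left_null[OF this nz] assms(5) show False
      unfolding pair_controllable_def by simp
  qed
  have pbh: "v = 0" if h1: "v v* cmat (e *\<^sub>R mat 1 + \<kappa> *\<^sub>R W) = s *s v"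
    and h2: "v v* cmat (\<beta> *\<^sub>R diagm \<delta>) = 0" for s v
  proof (rule pbhW)
    have "complex_of_real e *s v + complex_of_real \<kappa> *s (v v* cmat W) = s *s v"
      using h1 by (simp add: vm_phi)
    thus "v v* cmat W = ((s - complex_of_real e) / complex_of_real \<kappa>) *s v"
      using k0 unfolding vec_eq_iff by (auto simp: field_simps)
    show "v v* cmat (diagm \<delta>) = 0"
      using h2 b0 by (simp add: vm_psi)
  qed
  show ?thesis
    using ctrl_from_span[OF kalman[OF pbh]] unfolding e_def \<kappa>_def \<beta>_def by simp
qed

end
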